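(* Let $\alpha>0$ and $\beta>0$ be real numbers. A $2\times 2$ table $P=\begin{pmatrix} p_{00} & p_{01}\\ p_{10} & p_{11}\end{pmatrix}$ (i.e. $p_{ij}>0$ for all $i,j\in\{0,1\}$ and $p_{00}+p_{01}+p_{10}+p_{11}=1$) satisfies \[ \frac{p_{00}p_{11}}{p_{01}p_{10}}=\alpha^2 \quad\text{and}\quad \frac{p_{00}p_{10}}{p_{01}p_{11}}=\beta^2 \] if and only if there exists a real number $v$ with $0<v<\frac{1}{\alpha+\beta}$ such that \[ P=\begin{pmatrix} \frac{\beta}{\beta+\frac{1}{\alpha}}\,[1-(\beta+\alpha)v] & \frac{1}{\alpha\beta+1}\,[1-(\beta+\alpha)v]\\ \beta v & \alpha v\end{pmatrix}. \]
   Context: A $2\times 2$ table is a point of the open probability simplex $\Delta=\{(p_{ij})\in\mathbb{A}^4: \sum p_{ij}=1,\ p_{ij}>0\}$. The odds ratios are $r_\times=\frac{p_{00}p_{11}}{p_{01}p_{10}}$ and $r_{||}=\frac{p_{00}p_{10}}{p_{01}p_{11}}$, written as $r_\times=\alpha^2$, $r_{||}=\beta^2$ with $\alpha,\beta>0$. *)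

theory Defs
  imports Complex_Main
begin

definition table2x2 :: "real \<Rightarrow> real \<Rightarrow> real \<Rightarrow> real \<Rightarrow> bool" where
  "table2x2 p00 p01 p10 p11 \<longleftrightarrow>
     p00 > 0 \<and> p01 > 0 \<and> p10 > 0 \<and> p11 > 0 \<and> p00 + p01 + p10 + p11 = 1"

end

theory Submission
  imports Defs
begin

theorem proposition2p2:
  fixes \<alpha> \<beta> p00 p01 p10 p11 :: real
  assumes "\<alpha> > 0" and "\<beta> > 0"
    and "table2x2 p00 p01 p10 p11"
  shows "(p00 * p11 / (p01 * p10) = \<alpha>^2 \<and> p00 * p10 / (p01 * p11) = \<beta>^2) \<longleftrightarrow>
    (\<exists>v::real. 0 < v \<and> v < 1 / (\<alpha> + \<beta>) \<and>
       p00 = \<beta> / (\<beta> + 1 / \<alpha>) * (1 - (\<beta> + \<alpha>) * v) \<and>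
       p01 = 1 / (\<alpha> * \<beta> + 1) * (1 - (\<beta> + \<alpha>) * v) \<and>
       p10 = \<beta> * v \<and>
       p11 = \<alpha> * v)"
proof -
  have a: "\<alpha> > 0" and b: "\<beta> > 0" using assms by auto
  have p: "p00 > 0" "p01 > 0" "p10 > 0" "p11 > 0" "p00 + p01 + p10 + p11 = 1"
    using assms(3) unfolding table2x2_def by auto
  have ab: "\<beta> / (\<beta> + 1 / \<alpha>) = \<alpha> * \<beta> / (\<alpha> * \<beta> + 1)"
    using a b by (simp add: field_simps)
  show ?thesis
  proof
    assume h: "p00 * p11 / (p01 * p10) = \<alpha>^2 \<and> p00 * p10 / (p01 * p11) = \<beta>^2"
    have e1: "p00 * p11 = \<alpha>^2 * (p01 * p10)" using h p by (simp add: field_simps)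
    have e2: "p00 * p10 = \<beta>^2 * (p01 * p11)" using h p by (simp add: field_simps)
    have "(p00 * p11) * (p00 * p10) = (\<alpha>^2 * (p01 * p10)) * (\<beta>^2 * (p01 * p11))"
      using e1 e2 by simp
    hence "p00^2 * (p10 * p11) = (\<alpha> * \<beta> * p01)^2 * (p10 * p11)"
      by (simp add: power2_eq_square algebra_simps)
    hence "p00^2 = (\<alpha> * \<beta> * p01)^2" using p by simp
    hence f1: "p00 = \<alpha> * \<beta> * p01"
      using p a b by (simp add: power2_eq_iff_nonneg)
    have "\<alpha> * \<beta> * p01 * p11 = \<alpha>^2 * (p01 * p10)" using e1 f1 by simp
    hence "p01 * (\<beta> * p11) = p01 * (\<alpha> * p10)" using a
      by (simp add: power2_eq_square algebra_simps)
    hence f2: "\<beta> * p11 = \<alpha> * p10" using p by simp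
    define v where "v = p10 / \<beta>"
    have v10: "p10 = \<beta> * v" using b by (simp add: v_def)
    have v11: "p11 = \<alpha> * v" using f2 b by (simp add: v_def field_simps)
    have s: "p01 * (\<alpha> * \<beta> + 1) = 1 - (\<beta> + \<alpha>) * v"
      using p(5) f1 v10 v11 by (simp add: algebra_simps)
    have v0: "v > 0" using p b by (simp add: v_def)
    have "(\<beta> + \<alpha>) * v < 1" using s p a b
      by (smt (verit) mult_pos_pos)
    hence vlt: "v < 1 / (\<alpha> + \<beta>)" using a b by (simp add: field_simps)
    have q01: "p01 = 1 / (\<alpha> * \<beta> + 1) * (1 - (\<beta> + \<alpha>) * v)"
    proof -
      have "\<alpha> * \<beta> + 1 > 0" using a b by (simp add: add_pos_pos)
      thus ?thesis using s by (simp add: field_simps)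
    qed
    have q00: "p00 = \<beta> / (\<beta> + 1 / \<alpha>) * (1 - (\<beta> + \<alpha>) * v)"
      unfolding ab using f1 q01 by simp
    show "\<exists>v::real. 0 < v \<and> v < 1 / (\<alpha> + \<beta>) \<and>
       p00 = \<beta> / (\<beta> + 1 / \<alpha>) * (1 - (\<beta> + \<alpha>) * v) \<and>
       p01 = 1 / (\<alpha> * \<beta> + 1) * (1 - (\<beta> + \<alpha>) * v) \<and>
       p10 = \<beta> * v \<and> p11 = \<alpha> * v"
      using v0 vlt q00 q01 v10 v11 by blast
  next
    assume "\<exists>v::real. 0 < v \<and> v < 1 / (\<alpha> + \<beta>) \<and>
       p00 = \<beta> / (\<beta> + 1 / \<alpha>) * (1 - (\<beta> + \<alpha>) * v) \<and>
       p01 = 1 / (\<alpha> * \<beta> + 1) * (1 - (\<beta> + \<alpha>) * v) \<and>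
       p10 = \<beta> * v \<and> p11 = \<alpha> * v"
    then obtain v where v: "0 < v" "p00 = \<beta> / (\<beta> + 1 / \<alpha>) * (1 - (\<beta> + \<alpha>) * v)"
       "p01 = 1 / (\<alpha> * \<beta> + 1) * (1 - (\<beta> + \<alpha>) * v)"
       "p10 = \<beta> * v" "p11 = \<alpha> * v" by blast
    have f1: "p00 = \<alpha> * \<beta> * p01" using v(2,3) unfolding ab by simp
    show "p00 * p11 / (p01 * p10) = \<alpha>^2 \<and> p00 * p10 / (p01 * p11) = \<beta>^2"
      using f1 v(4,5) p a b v(1) by (simp add: field_simps power2_eq_square)
  qed
qed

end
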